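(* Let $E$ be a Euclidean space. For closed subsets $V,W$ of $E$ we have $\tau(W\cap V)\geqslant\min\big(\tau(W),\tau(W\cap\partial V)\big)$.
   Context: For nonempty $A\subseteq E$, $d_A(x)=\inf_{p\in A}\|x-p\|$, and $d_\varnothing=+\infty$. For a nonempty closed $A\subseteq E$, the medial axis of $A$ is the closure of $\Delta_A=\{x\in E:\exists p\neq q\in A,\ \|x-p\|=\|x-q\|=d_A(x)\}$; the reach of $A$ at $p\in A$ is $\tau(A,p)=d_{\Delta_A}(p)$, and the reach of $A$ is $\tau(A)=\inf_{p\in A}\tau(A,p)$. By convention $\tau(\varnothing)=+\infty$. $\partial V$ is the topological boundary of $V$ in $E$. *)

theory Defs
  imports "HOL-Analysis.Analysis"
begin

definition distfun :: "'a::euclidean_space set \<Rightarrow> 'a \<Rightarrow> ereal" where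
  "distfun A x = (if A = {} then \<infinity> else ereal (infdist x A))"

definition Delta_set :: "'a::euclidean_space set \<Rightarrow> 'a set" where
  "Delta_set A = {x. \<exists>p q. p \<in> A \<and> q \<in> A \<and> p \<noteq> q \<and>
      norm (x - p) = infdist x A \<and> norm (x - q) = infdist x A}"

definition medial_axis :: "'a::euclidean_space set \<Rightarrow> 'a set" where
  "medial_axis A = closure (Delta_set A)"

definition reach_at :: "'a::euclidean_space set \<Rightarrow> 'a \<Rightarrow> ereal" where
  "reach_at A p = distfun (medial_axis A) p"

text \<open>Infimum over the empty set is +infinity, matching the convention reach {} = +infinity.\<close>
definition reach :: "'a::euclidean_space set \<Rightarrow> ereal" where
  "reach A = (INF p\<in>A. reach_at A p)"

end

theory Submission imports Defs begin

lemma infdist_closure_eq: "infdist x (closure S) = infdist x S"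
  by (simp add: infdist_eq_setdist)

lemma reach_le_Delta:
  fixes A :: "'a::euclidean_space set"
  assumes "y \<in> Delta_set A" "a \<in> A" "dist a y = infdist y A"
  shows "reach A \<le> ereal (infdist y A)"
proof -
  have "reach A \<le> reach_at A a" unfolding reach_def using assms(2) by (rule INF_lower)
  also have "\<dots> = ereal (infdist a (closure (Delta_set A)))"
    unfolding reach_at_def distfun_def medial_axis_def using assms(1) by auto
  also have "\<dots> \<le> ereal (dist a y)" unfolding infdist_closure_eq
    using infdist_le[OF assms(1)] by simp
  finally show ?thesis using assms(3) by simp
qed

lemma uniq_proj:
  fixes W :: "'a::euclidean_space set"
  assumes "a \<in> W" "b \<in> W" "dist y a = infdist y W" "dist y b = infdist y W"
    "ereal (infdist y W) < reach W"
  shows "a = b"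
proof (rule ccontr)
  assume "a \<noteq> b"
  then have "y \<in> Delta_set W" unfolding Delta_set_def using assms
    by (auto simp: dist_norm norm_minus_commute)
  from reach_le_Delta[OF this assms(1)] assms(3,5) show False
    by (simp add: dist_commute)
qed

lemma not_interior:
  fixes V W :: "'a::euclidean_space set"
  assumes cW: "closed W" and pW: "p \<in> W" and pV: "p \<in> V"
    and xp: "dist x p = infdist x (W \<inter> V)"
    and uW: "u \<in> W" and uV: "u \<notin> V" and xu: "dist x u = infdist x W"
    and lt: "ereal (infdist x (W \<inter> V)) < reach W"
  shows "p \<notin> interior V"
proof
  assume "p \<in> interior V"
  then obtain \<delta> where dpos: "\<delta> > 0" and bV: "ball p \<delta> \<subseteq> V"
    by (meson open_contains_ball open_interior interior_subset subset_trans)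
  define t where "t = infdist x (W \<inter> V)"
  define y where "y = (\<lambda>l::real. x + l *\<^sub>R (p - x))"
  have Wne: "W \<noteq> {}" using pW by auto
  have tnn: "t \<ge> 0" unfolding t_def by (rule infdist_nonneg)
  have yp: "dist (y l) p = (1 - l) * t" if "l \<in> {0..1}" for l
  proof -
    have "y l - p = (1 - l) *\<^sub>R (x - p)" unfolding y_def by (simp add: algebra_simps)
    then show ?thesis using that xp by (simp add: dist_norm t_def)
  qed
  have xy: "dist x (y l) = l * t" if "l \<in> {0..1}" for l
  proof -
    have "x - y l = (- l) *\<^sub>R (p - x)" unfolding y_def by (simp add: algebra_simps)
    then show ?thesis using that xp by (simp add: dist_norm t_def dist_commute norm_minus_commute)
  qed
  have dA: "infdist (y l) (W \<inter> V) \<ge> (1 - l) * t" if "l \<in> {0..1}" for l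
    using infdist_triangle[of x "W \<inter> V" "y l"] xy[OF that] unfolding t_def
    by (simp add: algebra_simps)
  have dW: "infdist (y l) W \<le> (1 - l) * t" if "l \<in> {0..1}" for l
    using infdist_le[OF pW, of "y l"] yp[OF that] by simp
  have uniq: "a = b" if "l \<in> {0..1}" "a \<in> W" "b \<in> W" "dist (y l) a = infdist (y l) W"
     "dist (y l) b = infdist (y l) W" for l a b
  proof (rule uniq_proj[OF that(2-5)])
    have "infdist (y l) W \<le> t" using dW[OF that(1)] that(1) tnn
      by (smt (verit) atLeastAtMost_iff mult_left_le_one_le)
    then show "ereal (infdist (y l) W) < reach W" using lt unfolding t_def
      by (meson ereal_less_eq(3) order_le_less_trans)
  qed
  define K where "K = (W - ball p \<delta>) \<inter> cball x (2 * t)"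
  have cK: "compact K" unfolding K_def
    by (intro closed_Int_compact closed_Diff cW open_ball compact_cball)
  define S2 where "S2 = fst ` {z \<in> {0..1} \<times> K. dist (y (fst z)) (snd z) = infdist (y (fst z)) W}"
  have cS2: "closed S2"
  proof -
    have "compact {z \<in> {0..1} \<times> K. dist (y (fst z)) (snd z) = infdist (y (fst z)) W}"
      unfolding y_def
      by (intro compact_Int_closed[of "{0..1} \<times> K" "{z. _ z = _ z}", simplified Int_def, simplified]
          compact_Times cK compact_Icc closed_Collect_eq continuous_intros)
    then show ?thesis unfolding S2_def
      by (intro compact_imp_closed compact_continuous_image continuous_intros)
  qed
  define S1 where "S1 = {l. dist (y l) p = infdist (y l) W}"
  have cS1: "closed S1" unfolding S1_def y_def
    by (intro closed_Collect_eq continuous_intros)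
  have cover: "{0..1} \<subseteq> S1 \<union> S2"
  proof
    fix l :: real assume l: "l \<in> {0..1}"
    obtain w where w: "w \<in> W" "infdist (y l) W = dist (y l) w"
      using infdist_attains_inf[OF cW Wne] by blast
    show "l \<in> S1 \<union> S2"
    proof (cases "w \<in> ball p \<delta>")
      case True
      then have "w \<in> W \<inter> V" using bV w by auto
      then have "dist (y l) w \<ge> (1 - l) * t" using dA[OF l] infdist_le by (smt (verit))
      then have "dist (y l) p = infdist (y l) W" using yp[OF l] dW[OF l] w(2) by simp
      then show ?thesis unfolding S1_def by simp
    next
      case False
      have "dist x w \<le> dist x (y l) + dist (y l) w" by (rule dist_triangle)
      also have "\<dots> \<le> l * t + (1 - l) * t" using xy[OF l] dW[OF l] w(2) by simp
      also have "\<dots> = t" by (simp add: algebra_simps)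
      finally have "dist x w \<le> t" .
      then have "w \<in> K" unfolding K_def using False w(1) tnn by auto
      then have "(l, w) \<in> {z \<in> {0..1} \<times> K. dist (y (fst z)) (snd z) = infdist (y (fst z)) W}"
        using l w(2) by simp
      then have "l \<in> S2" unfolding S2_def by (rule rev_image_eqI) simp
      then show ?thesis by simp
    qed
  qed
  have disj: "S1 \<inter> S2 \<inter> {0..1} = {}"
  proof (rule ccontr)
    assume "S1 \<inter> S2 \<inter> {0..1} \<noteq> {}"
    then obtain l where l0: "l \<in> {0..1}" "l \<in> S1" "l \<in> S2" by blast
    then obtain z where z: "z \<in> {z \<in> {0..1} \<times> K. dist (y (fst z)) (snd z) = infdist (y (fst z)) W}"
      "l = fst z" unfolding S2_def by blast
    define w where "w = snd z"
    have l: "l \<in> {0..1}" "l \<in> S1" "w \<in> K" "dist (y l) w = infdist (y l) W"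
      using l0 z unfolding w_def by auto
    have "p = w" using uniq[OF l(1) pW _ _ l(4)] l(2,3) unfolding S1_def K_def by auto
    then show False using l(3) dpos unfolding K_def by auto
  qed
  have "1 \<in> S1" unfolding S1_def y_def using pW by simp
  moreover have "0 \<in> S2"
  proof -
    have "u \<notin> ball p \<delta>" using uV bV by auto
    moreover have "dist x u \<le> 2 * t" using xu infdist_mono[of "W \<inter> V" W x] pW pV tnn
      unfolding t_def by force
    ultimately have "(0, u) \<in> {z \<in> {0..1} \<times> K. dist (y (fst z)) (snd z) = infdist (y (fst z)) W}"
      unfolding K_def y_def using uW xu by simp
    then show ?thesis unfolding S2_def by (rule rev_image_eqI) simp
  qed
  ultimately show False
    using connected_closedD[OF connected_Icc[of "0::real" 1] disj cover cS1 cS2] by auto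
qed


lemma main_Delta:
  fixes V W :: "'a::euclidean_space set"
  assumes cV: "closed V" and cW: "closed W" and xD: "x \<in> Delta_set (W \<inter> V)"
  shows "min (reach W) (reach (W \<inter> frontier V)) \<le> ereal (infdist x (W \<inter> V))"
proof (rule ccontr)
  define t where "t = infdist x (W \<inter> V)"
  assume "\<not> min (reach W) (reach (W \<inter> frontier V)) \<le> ereal (infdist x (W \<inter> V))"
  then have ltW: "ereal t < reach W" and ltB: "ereal t < reach (W \<inter> frontier V)"
    unfolding t_def by (auto simp: not_le)
  obtain p q where pq: "p \<in> W \<inter> V" "q \<in> W \<inter> V" "p \<noteq> q" "dist x p = t" "dist x q = t"
    using xD unfolding Delta_set_def t_def by (auto simp: dist_norm)
  have Wne: "W \<noteq> {}" using pq by auto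
  obtain u where u: "u \<in> W" "infdist x W = dist x u"
    using infdist_attains_inf[OF cW Wne] by blast
  have dWt: "infdist x W \<le> t" using infdist_le[of p W x] pq by auto
  have ltW': "ereal (infdist x W) < reach W" using dWt ltW
    by (meson ereal_less_eq(3) order_le_less_trans)
  have uV: "u \<notin> V"
  proof
    assume "u \<in> V"
    then have "dist x u \<ge> t" using u(1) infdist_le[of u "W \<inter> V" x] unfolding t_def by auto
    then have e: "dist x u = t" using dWt u(2) by simp
    have "p = u" using uniq_proj[of p W u x] pq u e ltW' by auto
    moreover have "q = u" using uniq_proj[of q W u x] pq u e ltW' by auto
    ultimately show False using pq(3) by simp
  qed
  have "p \<notin> interior V"
    by (rule not_interior[OF cW _ _ _ u(1) uV u(2)[symmetric]]) (use pq ltW in \<open>auto simp: t_def\<close>)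
  moreover have "q \<notin> interior V"
    by (rule not_interior[OF cW _ _ _ u(1) uV u(2)[symmetric]]) (use pq ltW in \<open>auto simp: t_def\<close>)
  ultimately have pB: "p \<in> W \<inter> frontier V" and qB: "q \<in> W \<inter> frontier V"
    using pq cV by (auto simp: frontier_def closure_closed)
  have sub: "W \<inter> frontier V \<subseteq> W \<inter> V" using cV by (auto simp: frontier_def closure_closed)
  have dB: "infdist x (W \<inter> frontier V) = t"
  proof (rule antisym)
    show "infdist x (W \<inter> frontier V) \<le> t" using infdist_le[OF pB, of x] pq by simp
    show "t \<le> infdist x (W \<inter> frontier V)" unfolding t_def
      by (rule infdist_mono[OF sub]) (use pB in auto)
  qed
  have "x \<in> Delta_set (W \<inter> frontier V)" unfolding Delta_set_def
    using pB qB pq dB by (auto simp: dist_norm)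
  from reach_le_Delta[OF this pB] pq dB ltB show False by (simp add: dist_commute)
qed

theorem theorem2p4:
  fixes V W :: "'a::euclidean_space set"
  assumes "closed V" and "closed W"
  shows "reach (W \<inter> V) \<ge> min (reach W) (reach (W \<inter> frontier V))"
  unfolding reach_def[of "W \<inter> V"]
proof (rule INF_greatest)
  define r where "r = min (reach W) (reach (W \<inter> frontier V))"
  fix a assume aA: "a \<in> W \<inter> V"
  show "min (reach W) (reach (W \<inter> frontier V)) \<le> reach_at (W \<inter> V) a"
  proof (cases "Delta_set (W \<inter> V) = {}")
    case True
    then show ?thesis by (simp add: reach_at_def distfun_def medial_axis_def)
  next
    case False
    have eq: "reach_at (W \<inter> V) a = ereal (infdist a (Delta_set (W \<inter> V)))"
      using False by (simp add: reach_at_def distfun_def medial_axis_def infdist_closure_eq)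
    show ?thesis unfolding eq r_def[symmetric]
    proof (rule ccontr)
      assume "\<not> r \<le> ereal (infdist a (Delta_set (W \<inter> V)))"
      then obtain d where d: "infdist a (Delta_set (W \<inter> V)) < d" "ereal d < r"
        using ereal_dense2[of "ereal (infdist a (Delta_set (W \<inter> V)))" r] by (auto simp: not_le)
      then obtain z where z: "z \<in> Delta_set (W \<inter> V)" "dist a z < d"
        using cInf_lessD[of "dist a ` Delta_set (W \<inter> V)" d] False
        by (auto simp: infdist_notempty)
      have "r \<le> ereal (infdist z (W \<inter> V))"
        unfolding r_def by (rule main_Delta[OF assms z(1)])
      also have "\<dots> \<le> ereal (dist z a)" using infdist_le[OF aA, of z] by simp
      also have "\<dots> < ereal d" using z(2) by (simp add: dist_commute)
      finally show False using d(2) by simp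
    qed
  qed
qed

end
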